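(* Let $\boldsymbol{\mathcal{G}}=(\mathcal{V},\boldsymbol{\mathcal{E}},\mu(\cdot))$ be a stochastic digraph with vertex set $\mathbb{Z}_n=\{1,\dots,n\}$, edge sets $\mathcal{E}_1,\dots,\mathcal{E}_h$, and out-neighborhood map $H(x,w)=\{y\in\mathbb{Z}_n:(x,y)\in\mathcal{E}_w\}$, and assume that there is no pair $(i,w)\in\mathbb{Z}_n\times\mathbb{Z}_h$ with $\mu(\{w\})>0$ and $H(i,w)=\emptyset$. Let $\boldsymbol{x}$ be a stochastic directed path of $\boldsymbol{\mathcal{G}}$, i.e., $\boldsymbol{x}\in\mathcal{S}(x)$ for some $x\in\mathbb{Z}_n$. For $i,j\in\mathbb{Z}_n$ define $$\ell_{i,j}:=\sum_{s\in\{w\in\mathbb{Z}_h:\,H(i,w)=\{j\}\}}\mu(\{s\})\in[0,1],\qquad m_{i,j}:=\sum_{s\in\{w\in\mathbb{Z}_h:\,H(i,w)\cap\{j\}\neq\emptyset\}}\mu(\{s\})\in[0,1].$$ Then, for each $i,j\in\mathbb{Z}_n$ (and each time $k$), $$\ell_{i,j}\leqslant \mathbb{P}(\boldsymbol{x}_{k+1}=j\mid \boldsymbol{x}_k=i)\leqslant m_{i,j},$$ i.e., $\ell_{i,j}$ and $m_{i,j}$ are a lower and an upper bound, respectively, on the transition probability from node $i$ to node $j$.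
   Context: A stochastic digraph is a triple $\boldsymbol{\mathcal{G}}=(\mathcal{V},\boldsymbol{\mathcal{E}},\mu(\cdot))$ where $\mathcal{V}=\mathbb{Z}_n$, $\boldsymbol{\mathcal{E}}=\{\mathcal{E}_s\}_{s=1}^h$ ($h<\infty$) with each $\mathcal{E}_s\subset\mathbb{Z}_n\times\mathbb{Z}_n$, and $\mu$ is the common distribution of an i.i.d. sequence of random variables $\boldsymbol{w}_k:\Omega\to\mathbb{Z}_h=\{1,\dots,h\}$, $k\in\mathbb{Z}_{\geqslant0}$, on a probability space $(\Omega,\mathcal{F},\mathbb{P})$: $\mu(F)=\mathbb{P}(\boldsymbol{w}_k\in F)$ for $F\subset\mathbb{Z}_h$. A sequence $\{(\phi_k,w_k)\}_{k=0}^K$ is a regular directed path starting at $x$ if $\phi_0=x$ and $\phi_{k+1}\in H(\phi_k,w_k)$ for $k=0,\dots,K-1$. A stochastic directed path from $x$ is a map $\omega\mapsto\{\boldsymbol{x}_k(\omega)\}_{k=0}^{\boldsymbol{K}(\omega)}$, with $\boldsymbol{K}:\Omega\to\mathbb{Z}_{\geqslant0}\cup\{\infty\}$ a random variable, such that (path-wise feasibility) for each $\omega$, $\{(\boldsymbol{x}_k(\omega),\boldsymbol{w}_k(\omega))\}_{k=0}^{\boldsymbol{K}(\omega)}$ is a regular directed path from $x$, and (causal measurability) for each $k$, $\omega\mapsto\boldsymbol{x}_{k+1}(\omega)$ is $\mathcal{F}_k$-measurable, where $(\mathcal{F}_k)_k$ is the minimal filtration generated by $\boldsymbol{w}$ (i.e.,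 $\mathcal{F}_k=\sigma(\boldsymbol{w}_0,\dots,\boldsymbol{w}_k)$). A stochastic directed path is maximal if it cannot be extended; $\mathcal{S}(x)$ denotes the set of maximal stochastic directed paths from $x$. *)

theory Defs
  imports "HOL-Probability.Probability"
begin

definition Hnb :: "nat \<Rightarrow> (nat \<Rightarrow> (nat \<times> nat) set) \<Rightarrow> nat \<Rightarrow> nat \<Rightarrow> nat set" where
  "Hnb n E x s = {y \<in> {1..n}. (x, y) \<in> E s}"

definition stoch_digraph ::
  "nat \<Rightarrow> nat \<Rightarrow> (nat \<Rightarrow> (nat \<times> nat) set) \<Rightarrow> 'a measure \<Rightarrow> (nat \<Rightarrow> 'a \<Rightarrow> nat) \<Rightarrow> bool" where
  "stoch_digraph n h E M w \<longleftrightarrow>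
     1 \<le> n \<and> 1 \<le> h \<and> prob_space M \<and>
     (\<forall>s\<in>{1..h}. E s \<subseteq> {1..n} \<times> {1..n}) \<and>
     (\<forall>k. w k \<in> measurable M (count_space UNIV)) \<and>
     (\<forall>k. \<forall>\<omega>\<in>space M. w k \<omega> \<in> {1..h}) \<and>
     prob_space.indep_vars M (\<lambda>_. count_space UNIV) w UNIV \<and>
     (\<forall>k. distr M (count_space UNIV) (w k) = distr M (count_space UNIV) (w 0))"

definition mu :: "'a measure \<Rightarrow> (nat \<Rightarrow> 'a \<Rightarrow> nat) \<Rightarrow> nat \<Rightarrow> real" where
  "mu M w s = measure M {\<omega> \<in> space M. w 0 \<omega> = s}"

definition nat_filt :: "'a measure \<Rightarrow> (nat \<Rightarrow> 'a \<Rightarrow> nat) \<Rightarrow> nat \<Rightarrow> 'a measure" where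
  "nat_filt M w k = sigma (space M) (\<Union>i\<in>{..k}. {w i -` A \<inter> space M | A. True})"

definition stoch_path ::
  "nat \<Rightarrow> (nat \<Rightarrow> (nat \<times> nat) set) \<Rightarrow> 'a measure \<Rightarrow> (nat \<Rightarrow> 'a \<Rightarrow> nat) \<Rightarrow> nat
    \<Rightarrow> (nat \<Rightarrow> 'a \<Rightarrow> nat) \<Rightarrow> ('a \<Rightarrow> enat) \<Rightarrow> bool" where
  "stoch_path n E M w x0 x K \<longleftrightarrow>
     x0 \<in> {1..n} \<and>
     K \<in> measurable M (count_space UNIV) \<and>
     (\<forall>\<omega>\<in>space M. x 0 \<omega> = x0 \<and>
        (\<forall>k. enat (Suc k) \<le> K \<omega> \<longrightarrow> x (Suc k) \<omega> \<in> Hnb n E (x k \<omega>) (w k \<omega>))) \<and>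
     (\<forall>k. x (Suc k) \<in> measurable (nat_filt M w k) (count_space UNIV))"

definition max_stoch_path ::
  "nat \<Rightarrow> (nat \<Rightarrow> (nat \<times> nat) set) \<Rightarrow> 'a measure \<Rightarrow> (nat \<Rightarrow> 'a \<Rightarrow> nat) \<Rightarrow> nat
    \<Rightarrow> (nat \<Rightarrow> 'a \<Rightarrow> nat) \<Rightarrow> ('a \<Rightarrow> enat) \<Rightarrow> bool" where
  "max_stoch_path n E M w x0 x K \<longleftrightarrow>
     stoch_path n E M w x0 x K \<and>
     (\<forall>x' K'. stoch_path n E M w x0 x' K' \<and>
        (\<forall>\<omega>\<in>space M. K \<omega> \<le> K' \<omega> \<and> (\<forall>k. enat k \<le> K \<omega> \<longrightarrow> x' k \<omega> = x k \<omega>))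
        \<longrightarrow> (\<forall>\<omega>\<in>space M. K' \<omega> = K \<omega>))"

end

theory Submission
  imports Defs
begin

definition Ew :: "'a measure \<Rightarrow> (nat \<Rightarrow> 'a \<Rightarrow> nat) \<Rightarrow> nat \<Rightarrow> 'a set set" where
  "Ew M w i = {w i -` A \<inter> space M | A. True}"

definition Gf :: "'a measure \<Rightarrow> (nat \<Rightarrow> 'a \<Rightarrow> nat) \<Rightarrow> nat \<Rightarrow> 'a measure" where
  "Gf M w k = sigma (space M) (\<Union>i\<in>{..<k}. Ew M w i)"

lemma gen_sub: "(\<Union>i\<in>I. Ew M w i) \<subseteq> Pow (space M)"
  by (auto simp: Ew_def)

lemma space_Gf: "space (Gf M w k) = space M"
  unfolding Gf_def by (rule space_measure_of[OF gen_sub])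

lemma sets_Gf: "sets (Gf M w k) = sigma_sets (space M) (\<Union>i\<in>{..<k}. Ew M w i)"
  unfolding Gf_def by (rule sets_measure_of[OF gen_sub])

lemma nat_filt_Gf: "nat_filt M w k = Gf M w (Suc k)"
  unfolding nat_filt_def Gf_def Ew_def lessThan_Suc_atMost by simp

lemma w_meas_Gf:
  assumes "i < k" shows "w i \<in> measurable (Gf M w k) (count_space UNIV)"
proof (rule measurableI)
  fix A :: "nat set"
  have "w i -` A \<inter> space M \<in> (\<Union>i\<in>{..<k}. Ew M w i)"
    using assms by (auto simp: Ew_def)
  then show "w i -` A \<inter> space (Gf M w k) \<in> sets (Gf M w k)"
    unfolding space_Gf sets_Gf by (rule sigma_sets.Basic)
qed simp

lemma Gf_mono:
  assumes "k \<le> k'" "f \<in> measurable (Gf M w k) N"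
  shows "f \<in> measurable (Gf M w k') N"
proof -
  have "sets (Gf M w k) \<subseteq> sets (Gf M w k')"
    unfolding sets_Gf
    by (rule sigma_sets_mono') (use assms(1) in \<open>fastforce\<close>)
  then show ?thesis using assms(2) unfolding measurable_def space_Gf by auto
qed

lemma Gf_to_M:
  assumes "\<And>i. w i \<in> measurable M (count_space UNIV)" "f \<in> measurable (Gf M w k) N"
  shows "f \<in> measurable M N"
proof -
  have "(\<Union>i\<in>{..<k}. Ew M w i) \<subseteq> sets M"
    using assms(1) by (auto simp: Ew_def)
  then have "sets (Gf M w k) \<subseteq> sets M"
    unfolding sets_Gf by (rule sets.sigma_sets_subset)
  then show ?thesis using assms(2) unfolding measurable_def space_Gf by auto
qed

lemma comp1:
  fixes f :: "'a \<Rightarrow> 'b::countable"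
  assumes "f \<in> measurable N (count_space UNIV)"
  shows "(\<lambda>\<omega>. F (f \<omega>)) \<in> measurable N (count_space UNIV)"
  by (rule measurable_compose[OF assms]) simp

lemma comp2:
  fixes f :: "'a \<Rightarrow> 'b::countable" and g :: "'a \<Rightarrow> 'c::countable"
  assumes "f \<in> measurable N (count_space UNIV)" "g \<in> measurable N (count_space UNIV)"
  shows "(\<lambda>\<omega>. F (f \<omega>) (g \<omega>)) \<in> measurable N (count_space UNIV)"
  by (rule measurable_compose_countable'[where f="\<lambda>a \<omega>. F a (g \<omega>)" and g=f and I=UNIV])
     (auto intro: comp1 assms)

lemma comp3:
  fixes f :: "'a \<Rightarrow> 'b::countable" and g :: "'a \<Rightarrow> 'c::countable" and h :: "'a \<Rightarrow> 'd::countable"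
  assumes "f \<in> measurable N (count_space UNIV)" "g \<in> measurable N (count_space UNIV)"
    "h \<in> measurable N (count_space UNIV)"
  shows "(\<lambda>\<omega>. F (f \<omega>) (g \<omega>) (h \<omega>)) \<in> measurable N (count_space UNIV)"
  by (rule measurable_compose_countable'[where f="\<lambda>a \<omega>. F a (g \<omega>) (h \<omega>)" and g=f and I=UNIV])
     (auto intro: comp2 assms)

lemma x_meas:
  assumes "stoch_path n E M w x0 x K"
  shows "x k \<in> measurable (Gf M w k) (count_space UNIV)"
proof (cases k)
  case 0
  have "(\<lambda>_. x0) \<in> measurable (Gf M w 0) (count_space UNIV)" by simp
  moreover have "\<And>\<omega>. \<omega> \<in> space (Gf M w 0) \<Longrightarrow> x 0 \<omega> = x0"
    using assms unfolding stoch_path_def space_Gf by auto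
  ultimately show ?thesis using 0 measurable_cong by metis
next
  case (Suc m)
  then show ?thesis using assms unfolding stoch_path_def nat_filt_Gf by auto
qed

lemma path_step:
  assumes "stoch_path n E M w x0 x K" "\<omega> \<in> space M" "enat (Suc k) \<le> K \<omega>"
  shows "x (Suc k) \<omega> \<in> Hnb n E (x k \<omega>) (w k \<omega>)"
  using assms unfolding stoch_path_def by blast

lemma maxK:
  assumes G: "stoch_digraph n h E M w" and path: "max_stoch_path n E M w x0 x K"
    and om: "\<omega> \<in> space M" and Km: "K \<omega> = enat m"
  shows "Hnb n E (x m \<omega>) (w m \<omega>) = {}"
proof (rule ccontr)
  assume ne: "Hnb n E (x m \<omega>) (w m \<omega>) \<noteq> {}"
  have sp: "stoch_path n E M w x0 x K" using path unfolding max_stoch_path_def by blast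
  have wM: "\<And>i. w i \<in> measurable M (count_space UNIV)" using G unfolding stoch_digraph_def by blast
  define F :: "nat \<Rightarrow> nat \<Rightarrow> nat \<Rightarrow> nat" where
    "F a s b = (if Hnb n E a s \<noteq> {} \<and> b \<notin> Hnb n E a s then (LEAST y. y \<in> Hnb n E a s) else b)" for a s b
  define x' where "x' k = (case k of 0 \<Rightarrow> x 0 | Suc m \<Rightarrow> (\<lambda>\<omega>. F (x m \<omega>) (w m \<omega>) (x (Suc m) \<omega>)))" for k
  define FK where "FK e \<omega>' = (case e of enat m \<Rightarrow>
      (if Hnb n E (x m \<omega>') (w m \<omega>') \<noteq> {} then enat (Suc m) else enat m) | \<infinity> \<Rightarrow> \<infinity>)" for e \<omega>'
  define K' where "K' \<omega>' = FK (K \<omega>') \<omega>'" for \<omega>'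
  have F_in: "F a s b \<in> Hnb n E a s" if "Hnb n E a s \<noteq> {}" for a s b
    using that unfolding F_def by (auto intro: LeastI_ex)
  have F_id: "F a s b = b" if "b \<in> Hnb n E a s" for a s b
    using that unfolding F_def by auto
  have agree: "x' k \<omega>' = x k \<omega>'" if "\<omega>' \<in> space M" "enat k \<le> K \<omega>'" for k \<omega>'
  proof (cases k)
    case (Suc m')
    then show ?thesis using path_step[OF sp that(1)] that(2) F_id unfolding x'_def by simp
  qed (simp add: x'_def)
  have Kmeas: "K \<in> measurable M (count_space UNIV)" using sp unfolding stoch_path_def by blast
  have K'meas: "K' \<in> measurable M (count_space UNIV)"
    unfolding K'_def
  proof (rule measurable_compose_countable'[where I=UNIV, OF _ Kmeas])
    fix e :: enat
    show "FK e \<in> measurable M (count_space UNIV)"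
    proof (cases e)
      case (enat m')
      have "(\<lambda>\<omega>'. (\<lambda>a s. if Hnb n E a s \<noteq> {} then enat (Suc m') else enat m') (x m' \<omega>') (w m' \<omega>'))
            \<in> measurable M (count_space UNIV)"
        by (rule comp2[OF Gf_to_M[OF wM x_meas[OF sp]] wM])
      then show ?thesis unfolding FK_def enat by simp
    next
      case infinity
      have "FK e = (\<lambda>_. \<infinity>)" unfolding FK_def infinity by (rule ext) simp
      then show ?thesis by simp
    qed
  qed simp
  have x'meas: "x' (Suc k) \<in> measurable (nat_filt M w k) (count_space UNIV)" for k
  proof -
    have "(\<lambda>\<omega>. F (x k \<omega>) (w k \<omega>) (x (Suc k) \<omega>)) \<in> measurable (Gf M w (Suc k)) (count_space UNIV)"
      by (rule comp3[OF Gf_mono[OF _ x_meas[OF sp]] w_meas_Gf x_meas[OF sp]]) auto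
    then show ?thesis unfolding nat_filt_Gf x'_def by simp
  qed
  have KK': "K \<omega>' \<le> K' \<omega>'" for \<omega>'
    unfolding K'_def FK_def by (cases "K \<omega>'") auto
  have sp': "stoch_path n E M w x0 x' K'"
    unfolding stoch_path_def
  proof (intro conjI ballI allI impI K'meas x'meas)
    show "x0 \<in> {1..n}" using sp unfolding stoch_path_def by blast
  next
    fix \<omega>' assume "\<omega>' \<in> space M" then show "x' 0 \<omega>' = x0"
      using sp unfolding stoch_path_def x'_def by simp
  next
    fix \<omega>' k assume om': "\<omega>' \<in> space M" and le: "enat (Suc k) \<le> K' \<omega>'"
    show "x' (Suc k) \<omega>' \<in> Hnb n E (x' k \<omega>') (w k \<omega>')"
    proof (cases "enat (Suc k) \<le> K \<omega>'")
      case True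
      then show ?thesis using agree[OF om' True] agree[OF om', of k] path_step[OF sp om' True]
        by (metis Suc_ile_eq order_less_imp_le)
    next
      case False
      then obtain m' where Km': "K \<omega>' = enat m'"
        by (cases "K \<omega>'") auto
      with False le have ne': "Hnb n E (x m' \<omega>') (w m' \<omega>') \<noteq> {}" and "K' \<omega>' = enat (Suc m')"
        unfolding K'_def FK_def by (auto split: if_splits)
      with False le Km' have km: "k = m'" by auto
      have "x' k \<omega>' = x k \<omega>'" using agree[OF om'] Km' km by simp
      then show ?thesis using F_in[OF ne'] km unfolding x'_def by simp
    qed
  qed
  have "\<forall>\<omega>\<in>space M. K' \<omega> = K \<omega>"
    using path sp' KK' agree unfolding max_stoch_path_def by blast
  with om have "K' \<omega> = K \<omega>" by blast
  with Km ne show False unfolding K'_def FK_def by simp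
qed

lemma Kchar:
  assumes G: "stoch_digraph n h E M w" and path: "max_stoch_path n E M w x0 x K"
    and om: "\<omega> \<in> space M"
  shows "enat k \<le> K \<omega> \<longleftrightarrow> (\<forall>m\<in>{..<k}. Hnb n E (x m \<omega>) (w m \<omega>) \<noteq> {})"
proof
  have sp: "stoch_path n E M w x0 x K" using path unfolding max_stoch_path_def by blast
  assume le: "enat k \<le> K \<omega>"
  show "\<forall>m\<in>{..<k}. Hnb n E (x m \<omega>) (w m \<omega>) \<noteq> {}"
  proof
    fix m assume "m \<in> {..<k}"
    then have "enat (Suc m) \<le> K \<omega>" using le by (metis Suc_leI lessThan_iff enat_ord_simps(1) order_trans)
    then show "Hnb n E (x m \<omega>) (w m \<omega>) \<noteq> {}" using path_step[OF sp om] by blast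
  qed
next
  assume H: "\<forall>m\<in>{..<k}. Hnb n E (x m \<omega>) (w m \<omega>) \<noteq> {}"
  show "enat k \<le> K \<omega>"
  proof (rule ccontr)
    assume "\<not> enat k \<le> K \<omega>"
    then obtain m where "K \<omega> = enat m" "m < k" by (cases "K \<omega>") auto
    with maxK[OF G path om] H show False by auto
  qed
qed

theorem theorem1:
  fixes n h :: nat and E :: "nat \<Rightarrow> (nat \<times> nat) set"
    and M :: "'a measure" and w :: "nat \<Rightarrow> 'a \<Rightarrow> nat"
    and x0 :: nat and x :: "nat \<Rightarrow> 'a \<Rightarrow> nat" and K :: "'a \<Rightarrow> enat"
    and i j k :: nat
  assumes G: "stoch_digraph n h E M w"
    and noempty: "\<not> (\<exists>i'\<in>{1..n}. \<exists>s\<in>{1..h}. mu M w s > 0 \<and> Hnb n E i' s = {})"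
    and path: "max_stoch_path n E M w x0 x K"
    and ij: "i \<in> {1..n}" "j \<in> {1..n}"
    and pos: "measure M {\<omega> \<in> space M. enat k \<le> K \<omega> \<and> x k \<omega> = i} > 0"
  shows "(\<Sum>s\<in>{s\<in>{1..h}. Hnb n E i s = {j}}. mu M w s)
           \<le> measure M {\<omega> \<in> space M. enat (Suc k) \<le> K \<omega> \<and> x k \<omega> = i \<and> x (Suc k) \<omega> = j}
             / measure M {\<omega> \<in> space M. enat k \<le> K \<omega> \<and> x k \<omega> = i}
       \<and> measure M {\<omega> \<in> space M. enat (Suc k) \<le> K \<omega> \<and> x k \<omega> = i \<and> x (Suc k) \<omega> = j}
             / measure M {\<omega> \<in> space M. enat k \<le> K \<omega> \<and> x k \<omega> = i}
           \<le> (\<Sum>s\<in>{s\<in>{1..h}. Hnb n E i s \<inter> {j} \<noteq> {}}. mu M w s)"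
proof -
  interpret prob_space M using G unfolding stoch_digraph_def by blast
  have sp: "stoch_path n E M w x0 x K" using path unfolding max_stoch_path_def by blast
  have wM: "\<And>i. w i \<in> measurable M (count_space UNIV)" using G unfolding stoch_digraph_def by blast
  have wh: "\<And>\<omega>. \<omega> \<in> space M \<Longrightarrow> w k \<omega> \<in> {1..h}" using G unfolding stoch_digraph_def by blast
  have Kmeas: "K \<in> measurable M (count_space UNIV)" using sp unfolding stoch_path_def by blast
  define A where "A = {\<omega> \<in> space M. enat k \<le> K \<omega> \<and> x k \<omega> = i}"
  define N where "N = {\<omega> \<in> space M. enat (Suc k) \<le> K \<omega> \<and> x k \<omega> = i \<and> x (Suc k) \<omega> = j}"
  define B where "B s = {\<omega> \<in> space M. w k \<omega> = s}" for s
  have A_eq: "A = {\<omega> \<in> space (Gf M w k). (\<forall>m\<in>{..<k}. Hnb n E (x m \<omega>) (w m \<omega>) \<noteq> {}) \<and> x k \<omega> = i}"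
    unfolding A_def space_Gf using Kchar[OF G path] by auto
  have p1: "{\<omega> \<in> space (Gf M w k). Hnb n E (x m \<omega>) (w m \<omega>) \<noteq> {}} \<in> sets (Gf M w k)" if "m \<in> {..<k}" for m
  proof (rule predE)
    show "Measurable.pred (Gf M w k) (\<lambda>\<omega>. Hnb n E (x m \<omega>) (w m \<omega>) \<noteq> {})"
    proof -
      have mx: "x m \<in> measurable (Gf M w k) (count_space UNIV)"
        using that by (intro Gf_mono[OF _ x_meas[OF sp]]) auto
      have mw: "w m \<in> measurable (Gf M w k) (count_space UNIV)"
        using that by (intro w_meas_Gf) auto
      show ?thesis using comp2[OF mx mw, of "\<lambda>a b. Hnb n E a b \<noteq> {}"] by simp
    qed
  qed
  have p2: "{\<omega> \<in> space (Gf M w k). x k \<omega> = i} \<in> sets (Gf M w k)"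
  proof (rule predE)
    show "Measurable.pred (Gf M w k) (\<lambda>\<omega>. x k \<omega> = i)"
      by (rule comp1[where F="\<lambda>a. a = i", OF x_meas[OF sp]])
  qed
  have A_Gf: "A \<in> sets (Gf M w k)"
    unfolding A_eq
    by (rule sets.sets_Collect_conj[OF p2 sets.sets_Collect_finite_All[OF p1]]) auto
  have A_sig: "A \<in> sigma_sets (space M) (\<Union>i\<in>{..<k}. Ew M w i)"
    using A_Gf unfolding sets_Gf .
  have B_Ew: "B s \<in> Ew M w k" for s
    unfolding B_def Ew_def by (rule CollectI, rule exI[of _ "{s}"]) auto
  have B_ev: "B s \<in> events" for s
    using measurable_sets[OF wM, of "{s}" k] unfolding B_def by (simp add: vimage_def Int_def conj_commute)
  have A_ev: "A \<in> events"
  proof -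
    have "(\<Union>i\<in>{..<k}. Ew M w i) \<subseteq> sets M"
      using wM by (auto simp: Ew_def)
    then show ?thesis using A_sig sets.sigma_sets_subset by blast
  qed
  have N_ev: "N \<in> events"
  proof -
    have "(\<lambda>\<omega>. (\<lambda>a b c. enat (Suc k) \<le> a \<and> b = i \<and> c = j) (K \<omega>) (x k \<omega>) (x (Suc k) \<omega>)) \<in> measurable M (count_space UNIV)"
      by (rule comp3[OF Kmeas Gf_to_M[OF wM x_meas[OF sp]] Gf_to_M[OF wM x_meas[OF sp]]])
    then show ?thesis using predE unfolding N_def pred_def by simp
  qed
  have mu_eq: "prob (B s) = mu M w s" for s
  proof -
    have "distr M (count_space UNIV) (w k) = distr M (count_space UNIV) (w 0)"
      using G unfolding stoch_digraph_def by blast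
    then have "measure (distr M (count_space UNIV) (w k)) {s} = measure (distr M (count_space UNIV) (w 0)) {s}"
      by simp
    then have "measure M (w k -` {s} \<inter> space M) = measure M (w 0 -` {s} \<inter> space M)"
      by (simp add: measure_distr[OF wM])
    moreover have "\<And>k. w k -` {s} \<inter> space M = {\<omega> \<in> space M. w k \<omega> = s}" by auto
    ultimately show ?thesis unfolding mu_def B_def by simp
  qed
  have indep: "prob (A \<inter> B s) = prob A * mu M w s" for s
  proof -
    have iv: "indep_vars (\<lambda>_. count_space UNIV) w UNIV" using G unfolding stoch_digraph_def by blast
    then have "indep_sets (Ew M w) UNIV" unfolding indep_vars_def2 Ew_def by simp
    define I where "I b = (if b then {..<k} else {k})" for b
    have "indep_sets (\<lambda>b. sigma_sets (space M) (\<Union>i\<in>I b. Ew M w i)) UNIV"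
    proof (rule indep_sets_collect_sigma)
      show "indep_sets (Ew M w) (\<Union>b\<in>UNIV. I b)"
        by (rule indep_sets_mono_index[OF _ \<open>indep_sets (Ew M w) UNIV\<close>]) simp
    next
      fix i' b show "Int_stable (Ew M w i')"
        unfolding Int_stable_def Ew_def
      proof (intro ballI)
        fix a c assume "a \<in> {w i' -` A \<inter> space M |A. True}" "c \<in> {w i' -` A \<inter> space M |A. True}"
        then obtain A1 A2 where "a = w i' -` A1 \<inter> space M" "c = w i' -` A2 \<inter> space M" by auto
        then show "a \<inter> c \<in> {w i' -` A \<inter> space M |A. True}"
          by (intro CollectI exI[of _ "A1 \<inter> A2"]) auto
      qed
    next
      show "disjoint_family_on I UNIV" unfolding disjoint_family_on_def I_def by auto
    qed
    from indep_setsD[OF this, of UNIV "\<lambda>b. if b then A else B s"]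
    have "prob (\<Inter>b. if b then A else B s) = (\<Prod>b\<in>UNIV. prob (if b then A else B s))"
      using A_sig B_Ew[of s] by (auto simp: I_def intro: sigma_sets.Basic)
    moreover have "(\<Inter>b. if b then A else B s) = A \<inter> B s" by (auto simp: UNIV_bool)
    ultimately show ?thesis by (simp add: UNIV_bool mu_eq)
  qed
  have PA: "prob A > 0" using pos unfolding A_def .
  have union: "prob (\<Union>s\<in>S. A \<inter> B s) = (\<Sum>s\<in>S. mu M w s) * prob A" if "finite S" for S
  proof -
    have "prob (\<Union>s\<in>S. A \<inter> B s) = (\<Sum>s\<in>S. prob (A \<inter> B s))"
      using that A_ev B_ev by (intro finite_measure_finite_Union) (auto simp: disjoint_family_on_def B_def)
    also have "\<dots> = (\<Sum>s\<in>S. mu M w s) * prob A" by (simp add: indep sum_distrib_left sum_distrib_right mult.commute)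
    finally show ?thesis .
  qed
  have fin: "finite {s\<in>{1..h}. P s}" for P by simp
  have lower: "(\<Sum>s\<in>{s\<in>{1..h}. Hnb n E i s = {j}}. mu M w s) * prob A \<le> prob N"
  proof -
    have "(\<Union>s\<in>{s\<in>{1..h}. Hnb n E i s = {j}}. A \<inter> B s) \<subseteq> N"
    proof safe
      fix s \<omega> assume s: "s \<in> {1..h}" "Hnb n E i s = {j}" and a: "\<omega> \<in> A" and b: "\<omega> \<in> B s"
      have om: "\<omega> \<in> space M" "enat k \<le> K \<omega>" "x k \<omega> = i" "w k \<omega> = s" using a b unfolding A_def B_def by auto
      have "K \<omega> \<noteq> enat k" using maxK[OF G path om(1), of k] om s by auto
      then have le: "enat (Suc k) \<le> K \<omega>" using om(2) by (metis Suc_ile_eq order_le_less)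
      have "x (Suc k) \<omega> = j" using path_step[OF sp om(1) le] om s by auto
      then show "\<omega> \<in> N" unfolding N_def using om le by auto
    qed
    then have "prob (\<Union>s\<in>{s\<in>{1..h}. Hnb n E i s = {j}}. A \<inter> B s) \<le> prob N"
      using N_ev by (rule finite_measure_mono)
    then show ?thesis using union[OF fin] by simp
  qed
  have upper: "prob N \<le> (\<Sum>s\<in>{s\<in>{1..h}. Hnb n E i s \<inter> {j} \<noteq> {}}. mu M w s) * prob A"
  proof -
    have "N \<subseteq> (\<Union>s\<in>{s\<in>{1..h}. Hnb n E i s \<inter> {j} \<noteq> {}}. A \<inter> B s)"
    proof
      fix \<omega> assume "\<omega> \<in> N"
      then have om: "\<omega> \<in> space M" "enat (Suc k) \<le> K \<omega>" "x k \<omega> = i" "x (Suc k) \<omega> = j"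
        unfolding N_def by auto
      have "enat k \<le> K \<omega>" using om(2) by (meson Suc_ile_eq order_less_imp_le)
      moreover have "j \<in> Hnb n E i (w k \<omega>)" using path_step[OF sp om(1) om(2)] om by simp
      ultimately show "\<omega> \<in> (\<Union>s\<in>{s\<in>{1..h}. Hnb n E i s \<inter> {j} \<noteq> {}}. A \<inter> B s)"
        using om wh[OF om(1)] unfolding A_def B_def by auto
    qed
    moreover have "(\<Union>s\<in>{s\<in>{1..h}. Hnb n E i s \<inter> {j} \<noteq> {}}. A \<inter> B s) \<in> events"
      using A_ev B_ev by auto
    ultimately have "prob N \<le> prob (\<Union>s\<in>{s\<in>{1..h}. Hnb n E i s \<inter> {j} \<noteq> {}}. A \<inter> B s)"
      by (rule finite_measure_mono)
    then show ?thesis using union[OF fin] by simp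
  qed
  show ?thesis
    using lower upper PA unfolding A_def[symmetric] N_def[symmetric]
    by (simp add: le_divide_eq divide_le_eq)
qed

end
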